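(* Let $\Sigma$ be a finite alphabet, $n$ a positive integer, $u,v\in\Sigma^\star$, and $r\in R_n(u)\cap R_n(v)$. Let $i_1,i_2\in[1,|u|]$ and $j_1,j_2\in[1,|v|]$ with $\operatorname{ord}(i_1,r(u))\ne\operatorname{ord}(j_1,r(v))$. Then Samson has a winning strategy in the game $\mathrm{FO}^2_n((u,i_1,i_2),(v,j_1,j_2))$.
   Context: Game $\mathrm{FO}^2_n((u,i_1,i_2),(v,j_1,j_2))$: pebble pair $x$ starts on $i_1$ in $u$ and $j_1$ in $v$, pebble pair $y$ on $i_2$ in $u$ and $j_2$ in $v$. In each of $n$ rounds Samson picks $z\in\{x,y\}$ and places one $z$-pebble on a position of one of the words (either one); Delilah places the other $z$-pebble on a position of the other word. Samson wins if initially or after some round the map $x^u\mapsto x^v$, $y^u\mapsto y^v$ is not a partial isomorphism (pebbled letters differ, or $\operatorname{ord}(x^u,y^u)\ne\operatorname{ord}(x^v,y^v)$); otherwise Delilah wins. Boundary positions: $\triangleright_a(w)=\min\{i:w_i=a\}$, $\triangleleft_a(w)=\max\{i:w_i=a\}$, $\triangleright_a(w,q)=\min\{i\in[q+1,|w|]:w_i=a\}$, $\triangleleft_a(w,q)=\max\{i\in[1,q-1]:w_i=a\}$ (undefined if empty). An $n$-ranker is a sequence $r=(p_1,\dots,p_n)$ of boundary positions with $r(w)=p_1(w)$ if $n=1$, undefined if $(p_1,\dots,p_{n-1})(w)$ is undefined, else $p_n(w,(p_1,\dots,p_{n-1})(w))$. $R_n(w)$ is the set of $n$-rankers defined over $w$.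 $\operatorname{ord}(i,j)\in\{<,=,>\}$ is the order type of $i,j$. *)

theory Defs
  imports Main
begin

text \<open>Words are lists; positions are 1-indexed, position i of w carries letter w ! (i - 1).\<close>

definition letter :: "'a list \<Rightarrow> nat \<Rightarrow> 'a" where
  "letter w i = w ! (i - 1)"

definition pos :: "'a list \<Rightarrow> nat set" where
  "pos w = {1..length w}"

datatype ordtype = OLess | OEq | OGreater

definition ord_type :: "nat \<Rightarrow> nat \<Rightarrow> ordtype" where
  "ord_type i j = (if i < j then OLess else if i = j then OEq else OGreater)"

text \<open>Boundary positions: Fst a is the right-pointing triangle (first a / next a),
  Lst a is the left-pointing triangle (last a / previous a).\<close>
datatype 'a bpos = Fst 'a | Lst 'a

definition opt_min :: "nat set \<Rightarrow> nat option" where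
  "opt_min S = (if S = {} then None else Some (Min S))"

definition opt_max :: "nat set \<Rightarrow> nat option" where
  "opt_max S = (if S = {} then None else Some (Max S))"

fun bp_start :: "'a bpos \<Rightarrow> 'a list \<Rightarrow> nat option" where
  "bp_start (Fst a) w = opt_min {i \<in> pos w. letter w i = a}"
| "bp_start (Lst a) w = opt_max {i \<in> pos w. letter w i = a}"

fun bp_from :: "'a bpos \<Rightarrow> 'a list \<Rightarrow> nat \<Rightarrow> nat option" where
  "bp_from (Fst a) w q = opt_min {i \<in> {q+1..length w}. letter w i = a}"
| "bp_from (Lst a) w q = opt_max {i \<in> {1..q-1}. letter w i = a}"

fun ranker_cont :: "'a bpos list \<Rightarrow> 'a list \<Rightarrow> nat option \<Rightarrow> nat option" where
  "ranker_cont [] w q = q"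
| "ranker_cont (p # ps) w None = None"
| "ranker_cont (p # ps) w (Some q) = ranker_cont ps w (bp_from p w q)"

text \<open>r(w) for a ranker r = (p_1,...,p_n), None meaning undefined.\<close>
fun ranker_eval :: "'a bpos list \<Rightarrow> 'a list \<Rightarrow> nat option" where
  "ranker_eval [] w = None"
| "ranker_eval (p # ps) w = ranker_cont ps w (bp_start p w)"

definition rankers :: "nat \<Rightarrow> 'a list \<Rightarrow> 'a bpos list set" where
  "rankers n w = {r. length r = n \<and> ranker_eval r w \<noteq> None}"

definition partial_iso :: "'a list \<Rightarrow> 'a list \<Rightarrow> nat \<Rightarrow> nat \<Rightarrow> nat \<Rightarrow> nat \<Rightarrow> bool" where
  "partial_iso u v i1 i2 j1 j2 \<longleftrightarrow>
     letter u i1 = letter v j1 \<and> letter u i2 = letter v j2 \<and> ord_type i1 i2 = ord_type j1 j2"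

text \<open>A round: Samson chooses pebble x or y and a word, and
  places that pebble on a position of the word; Delilah answers in the other word.\<close>
fun samson_wins :: "nat \<Rightarrow> 'a list \<Rightarrow> 'a list \<Rightarrow> nat \<Rightarrow> nat \<Rightarrow> nat \<Rightarrow> nat \<Rightarrow> bool" where
  "samson_wins 0 u v i1 i2 j1 j2 = (\<not> partial_iso u v i1 i2 j1 j2)"
| "samson_wins (Suc n) u v i1 i2 j1 j2 =
     (\<not> partial_iso u v i1 i2 j1 j2 \<or>
      (\<exists>p\<in>pos u. \<forall>q\<in>pos v. samson_wins n u v p i2 q j2) \<or>
      (\<exists>p\<in>pos u. \<forall>q\<in>pos v. samson_wins n u v i1 p j1 q) \<or>
      (\<exists>q\<in>pos v. \<forall>p\<in>pos u. samson_wins n u v p i2 q j2) \<or>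
      (\<exists>q\<in>pos v. \<forall>p\<in>pos u. samson_wins n u v i1 p j1 q))"

end

theory Submission
  imports Defs
begin

lemma pi_swap: "partial_iso u v i2 i1 j2 j1 = partial_iso u v i1 i2 j1 j2"
  unfolding partial_iso_def ord_type_def by auto

lemma sw_swap: "samson_wins n u v i1 i2 j1 j2 = samson_wins n u v i2 i1 j2 j1"
proof (induction n arbitrary: i1 i2 j1 j2)
  case 0 then show ?case using pi_swap by simp
next
  case (Suc n) show ?case using Suc pi_swap by (simp only: samson_wins.simps) blast
qed

lemma sw_notiso: "\<not> partial_iso u v i1 i2 j1 j2 \<Longrightarrow> samson_wins m u v i1 i2 j1 j2"
  by (cases m) auto

lemma sw_mono: "samson_wins n u v i1 i2 j1 j2 \<Longrightarrow> samson_wins (Suc n) u v i1 i2 j1 j2"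
proof (induction n arbitrary: i1 i2 j1 j2)
  case 0 then show ?case by simp
next
  case (Suc n)
  from Suc.prems show ?case
    apply (simp only: samson_wins.simps)
    using Suc.IH by meson
qed

lemma core_fst:
  assumes s: "s \<in> {k+1..length u}" "letter u s = a" "\<forall>i\<in>{k+1..length u}. letter u i = a \<longrightarrow> s \<le> i"
    and t: "t \<in> {l+1..length v}" "letter v t = a" "\<forall>i\<in>{l+1..length v}. letter v i = a \<longrightarrow> t \<le> i"
    and i1: "i1 \<in> pos u" and j1: "j1 \<in> pos v" and ne: "ord_type i1 s \<noteq> ord_type j1 t"
    and H: "\<forall>p\<in>pos u. \<forall>q\<in>pos v. ord_type p k \<noteq> ord_type q l \<longrightarrow> (\<forall>i j. samson_wins m u v p i q j)"
  shows "samson_wins (Suc m) u v i1 i2 j1 j2"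
proof (cases "ord_type i1 k = ord_type j1 l")
  case False
  then show ?thesis using H i1 j1 sw_mono by blast
next
  case eq: True
  have gt: "i1 > k \<and> j1 > l"
  proof (rule ccontr)
    assume "\<not> ?thesis"
    with eq have "i1 \<le> k" "j1 \<le> l" unfolding ord_type_def by (auto split: if_splits)
    then have "i1 < s" "j1 < t" using s t by auto
    then show False using ne unfolding ord_type_def by auto
  qed
  show ?thesis
  proof (cases "partial_iso u v i1 i2 j1 j2")
    case False then show ?thesis by simp
  next
    case iso: True
    have sp: "s \<in> pos u" "t \<in> pos v" using s t unfolding pos_def by auto
    consider "i1 > s \<and> j1 \<le> t" | "i1 \<le> s \<and> j1 > t" | "i1 = s \<and> j1 < t" | "i1 < s \<and> j1 = t"
      using ne unfolding ord_type_def by (auto split: if_splits)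
    then show ?thesis
    proof cases
      case 1
      have "\<forall>q\<in>pos v. samson_wins m u v i1 s j1 q"
      proof
        fix q assume q: "q \<in> pos v"
        show "samson_wins m u v i1 s j1 q"
        proof (cases "partial_iso u v i1 s j1 q")
          case False then show ?thesis by (rule sw_notiso)
        next
          case True
          then have "letter v q = a" "q < j1" using s 1 unfolding partial_iso_def ord_type_def
            by (auto split: if_splits)
          then have "q \<le> l" using t 1 q unfolding pos_def by force
          then have "ord_type s k \<noteq> ord_type q l" using s unfolding ord_type_def by auto
          then show ?thesis using H sp q sw_swap by blast
        qed
      qed
      then show ?thesis using sp by auto
    next
      case 2
      have "\<forall>p\<in>pos u. samson_wins m u v i1 p j1 t"
      proof
        fix p assume p: "p \<in> pos u"
        show "samson_wins m u v i1 p j1 t"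
        proof (cases "partial_iso u v i1 p j1 t")
          case False then show ?thesis by (rule sw_notiso)
        next
          case True
          then have "letter u p = a" "p < i1" using t 2 unfolding partial_iso_def ord_type_def
            by (auto split: if_splits)
          then have "p \<le> k" using s 2 p unfolding pos_def by force
          then have "ord_type p k \<noteq> ord_type t l" using t unfolding ord_type_def by auto
          then show ?thesis using H sp p sw_swap by blast
        qed
      qed
      then show ?thesis using sp by auto
    next
      case 3
      then have "letter v j1 \<noteq> a" using t gt j1 unfolding pos_def by force
      then show ?thesis using iso 3 s unfolding partial_iso_def by auto
    next
      case 4
      then have "letter u i1 \<noteq> a" using s gt i1 unfolding pos_def by force
      then show ?thesis using iso 4 t unfolding partial_iso_def by auto
    qed
  qed
qed

lemma core_lst:
  assumes s: "s \<in> {1..k-1}" "letter u s = a" "\<forall>i\<in>{1..k-1}. letter u i = a \<longrightarrow> i \<le> s"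
    and t: "t \<in> {1..l-1}" "letter v t = a" "\<forall>i\<in>{1..l-1}. letter v i = a \<longrightarrow> i \<le> t"
    and i1: "i1 \<in> pos u" and j1: "j1 \<in> pos v" and ne: "ord_type i1 s \<noteq> ord_type j1 t"
    and su: "s \<in> pos u" and tv: "t \<in> pos v"
    and H: "\<forall>p\<in>pos u. \<forall>q\<in>pos v. ord_type p k \<noteq> ord_type q l \<longrightarrow> (\<forall>i j. samson_wins m u v p i q j)"
  shows "samson_wins (Suc m) u v i1 i2 j1 j2"
proof (cases "ord_type i1 k = ord_type j1 l")
  case False
  then show ?thesis using H i1 j1 sw_mono by blast
next
  case eq: True
  have gt: "i1 < k \<and> j1 < l"
  proof (rule ccontr)
    assume "\<not> ?thesis"
    with eq have "i1 \<ge> k" "j1 \<ge> l" unfolding ord_type_def by (auto split: if_splits)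
    then have "i1 > s" "j1 > t" using s t by auto
    then show False using ne unfolding ord_type_def by auto
  qed
  show ?thesis
  proof (cases "partial_iso u v i1 i2 j1 j2")
    case False then show ?thesis by simp
  next
    case iso: True
    note sp = su tv
    consider "i1 < s \<and> j1 \<ge> t" | "i1 \<ge> s \<and> j1 < t" | "i1 = s \<and> j1 > t" | "i1 > s \<and> j1 = t"
      using ne unfolding ord_type_def by (auto split: if_splits)
    then show ?thesis
    proof cases
      case 1
      have "\<forall>q\<in>pos v. samson_wins m u v i1 s j1 q"
      proof
        fix q assume q: "q \<in> pos v"
        show "samson_wins m u v i1 s j1 q"
        proof (cases "partial_iso u v i1 s j1 q")
          case False then show ?thesis by (rule sw_notiso)
        next
          case True
          then have "letter v q = a" "q > j1" using s 1 unfolding partial_iso_def ord_type_def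
            by (auto split: if_splits)
          then have "q \<ge> l" using t 1 q unfolding pos_def by force
          then have "ord_type s k \<noteq> ord_type q l" using s unfolding ord_type_def by auto
          then show ?thesis using H sp q sw_swap by blast
        qed
      qed
      then show ?thesis using sp by auto
    next
      case 2
      have "\<forall>p\<in>pos u. samson_wins m u v i1 p j1 t"
      proof
        fix p assume p: "p \<in> pos u"
        show "samson_wins m u v i1 p j1 t"
        proof (cases "partial_iso u v i1 p j1 t")
          case False then show ?thesis by (rule sw_notiso)
        next
          case True
          then have "letter u p = a" "p > i1" using t 2 unfolding partial_iso_def ord_type_def
            by (auto split: if_splits)
          then have "p \<ge> k" using s 2 p unfolding pos_def by force
          then have "ord_type p k \<noteq> ord_type t l" using t unfolding ord_type_def by auto
          then show ?thesis using H sp p sw_swap by blast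
        qed
      qed
      then show ?thesis using sp by auto
    next
      case 3
      then have "letter v j1 \<noteq> a" using t gt j1 unfolding pos_def by force
      then show ?thesis using iso 3 s unfolding partial_iso_def by auto
    next
      case 4
      then have "letter u i1 \<noteq> a" using s gt i1 unfolding pos_def by force
      then show ?thesis using iso 4 t unfolding partial_iso_def by auto
    qed
  qed
qed

lemma opt_min_some: "opt_min S = Some s \<Longrightarrow> finite S \<Longrightarrow> s \<in> S \<and> (\<forall>x\<in>S. s \<le> x)"
  unfolding opt_min_def by (auto split: if_splits intro: Min_in)

lemma opt_max_some: "opt_max S = Some s \<Longrightarrow> finite S \<Longrightarrow> s \<in> S \<and> (\<forall>x\<in>S. x \<le> s)"
  unfolding opt_max_def by (auto split: if_splits intro: Max_in)

lemma cont_snoc: "ranker_cont (ps @ [p]) w x =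
  (case ranker_cont ps w x of None \<Rightarrow> None | Some q \<Rightarrow> bp_from p w q)"
proof (induction ps arbitrary: x)
  case Nil then show ?case by (cases x) auto
next
  case (Cons a ps) then show ?case by (cases x) auto
qed

lemma eval_snoc: "r \<noteq> [] \<Longrightarrow> ranker_eval (r @ [p]) w =
  (case ranker_eval r w of None \<Rightarrow> None | Some q \<Rightarrow> bp_from p w q)"
  by (cases r) (auto simp: cont_snoc)

lemma step:
  assumes "bp_from p u k = Some s" "bp_from p v l = Some t"
    and i1: "i1 \<in> pos u" and j1: "j1 \<in> pos v" and ne: "ord_type i1 s \<noteq> ord_type j1 t"
    and H: "\<forall>p\<in>pos u. \<forall>q\<in>pos v. ord_type p k \<noteq> ord_type q l \<longrightarrow> (\<forall>i j. samson_wins m u v p i q j)"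
    and kl: "k \<le> length u + 1" "l \<le> length v + 1"
  shows "samson_wins (Suc m) u v i1 i2 j1 j2"
proof (cases p)
  case (Fst a)
  have S: "s \<in> {i \<in> {k+1..length u}. letter u i = a} \<and> (\<forall>x\<in>{i \<in> {k+1..length u}. letter u i = a}. s \<le> x)"
    using assms(1) Fst by (intro opt_min_some) auto
  have T: "t \<in> {i \<in> {l+1..length v}. letter v i = a} \<and> (\<forall>x\<in>{i \<in> {l+1..length v}. letter v i = a}. t \<le> x)"
    using assms(2) Fst by (intro opt_min_some) auto
  show ?thesis
    by (rule core_fst[where a=a and k=k and l=l and s=s and t=t]) (use S T i1 j1 ne H in auto)
next
  case (Lst a)
  have S: "s \<in> {i \<in> {1..k-1}. letter u i = a} \<and> (\<forall>x\<in>{i \<in> {1..k-1}. letter u i = a}. x \<le> s)"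
    using assms(1) Lst by (intro opt_max_some) auto
  have T: "t \<in> {i \<in> {1..l-1}. letter v i = a} \<and> (\<forall>x\<in>{i \<in> {1..l-1}. letter v i = a}. x \<le> t)"
    using assms(2) Lst by (intro opt_max_some) auto
  show ?thesis
    by (rule core_lst[where a=a and k=k and l=l and s=s and t=t]) (use S T i1 j1 ne H kl in \<open>auto simp: pos_def\<close>)
qed

lemma bp_from_pos: "q \<le> length w + 1 \<Longrightarrow> bp_from p w q = Some s \<Longrightarrow> s \<in> pos w"
proof (cases p)
  case (Fst a)
  assume "bp_from p w q = Some s"
  then have "opt_min {i \<in> {q+1..length w}. letter w i = a} = Some s" using Fst by simp
  then show ?thesis using opt_min_some[of _ s] unfolding pos_def by fastforce
next
  case (Lst a)
  assume "q \<le> length w + 1" "bp_from p w q = Some s"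
  then have "opt_max {i \<in> {1..q-1}. letter w i = a} = Some s" using Lst by simp
  then show ?thesis using opt_max_some[of _ s] \<open>q \<le> length w + 1\<close> unfolding pos_def by fastforce
qed

lemma bp_start_pos: "bp_start p w = Some s \<Longrightarrow> s \<in> pos w"
proof (cases p)
  case (Fst a)
  assume "bp_start p w = Some s"
  then have "opt_min {i \<in> pos w. letter w i = a} = Some s" using Fst by simp
  then show ?thesis using opt_min_some[of _ s] unfolding pos_def by fastforce
next
  case (Lst a)
  assume "bp_start p w = Some s"
  then have "opt_max {i \<in> pos w. letter w i = a} = Some s" using Lst by simp
  then show ?thesis using opt_max_some[of _ s] unfolding pos_def by fastforce
qed

lemma cont_pos: "x \<in> pos w \<Longrightarrow> ranker_cont ps w (Some x) = Some s \<Longrightarrow> s \<in> pos w"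
proof (induction ps arbitrary: x)
  case Nil then show ?case by simp
next
  case (Cons p ps)
  then obtain y where y: "bp_from p w x = Some y"
    by (cases "bp_from p w x") (auto, cases ps, auto)
  have "y \<in> pos w" using bp_from_pos[OF _ y] Cons.prems unfolding pos_def by auto
  then show ?case using Cons y by simp
qed

lemma eval_pos: "ranker_eval r w = Some s \<Longrightarrow> s \<in> pos w"
proof (cases r)
  case Nil assume "ranker_eval r w = Some s" then show ?thesis using Nil by simp
next
  case (Cons p ps)
  assume h: "ranker_eval r w = Some s"
  then obtain x where x: "bp_start p w = Some x" using Cons
    by (cases "bp_start p w") (auto, cases ps, auto)
  show ?thesis using cont_pos[OF bp_start_pos[OF x]] h x Cons by simp
qed

lemma main:
  "\<forall>s t i1 i2 j1 j2. ranker_eval r u = Some s \<longrightarrow> ranker_eval r v = Some t \<longrightarrow>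
     i1 \<in> pos u \<longrightarrow> j1 \<in> pos v \<longrightarrow> ord_type i1 s \<noteq> ord_type j1 t \<longrightarrow>
     samson_wins (length r) u v i1 i2 j1 j2"
proof (induction r rule: rev_induct)
  case Nil then show ?case by simp
next
  case (snoc p r)
  show ?case
  proof (intro allI impI)
    fix s t i1 i2 j1 j2
    assume es: "ranker_eval (r @ [p]) u = Some s" and et: "ranker_eval (r @ [p]) v = Some t"
      and i1: "i1 \<in> pos u" and j1: "j1 \<in> pos v" and ne: "ord_type i1 s \<noteq> ord_type j1 t"
    show "samson_wins (length (r @ [p])) u v i1 i2 j1 j2"
    proof (cases "r = []")
      case True
      have H0: "\<forall>p'\<in>pos u. \<forall>q\<in>pos v. ord_type p' 0 \<noteq> ord_type q 0 \<longrightarrow> (\<forall>i j. samson_wins 0 u v p' i q j)"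
        unfolding pos_def ord_type_def by auto
      have H1: "\<forall>p'\<in>pos u. \<forall>q\<in>pos v. ord_type p' (length u + 1) \<noteq> ord_type q (length v + 1) \<longrightarrow> (\<forall>i j. samson_wins 0 u v p' i q j)"
        unfolding pos_def ord_type_def by auto
      show ?thesis
      proof (cases p)
        case (Fst a)
        have "bp_from p u 0 = Some s" "bp_from p v 0 = Some t"
          using es et True Fst by (simp_all add: pos_def)
        from step[OF this i1 j1 ne H0] True show ?thesis by simp
      next
        case (Lst a)
        have "bp_from p u (length u + 1) = Some s" "bp_from p v (length v + 1) = Some t"
          using es et True Lst by (simp_all add: pos_def)
        from step[OF this i1 j1 ne H1] True show ?thesis by simp
      qed
    next
      case False
      obtain k where k: "ranker_eval r u = Some k" "bp_from p u k = Some s"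
        using es eval_snoc[OF False] by (cases "ranker_eval r u") auto
      obtain l where l: "ranker_eval r v = Some l" "bp_from p v l = Some t"
        using et eval_snoc[OF False] by (cases "ranker_eval r v") auto
      have H: "\<forall>p'\<in>pos u. \<forall>q\<in>pos v. ord_type p' k \<noteq> ord_type q l \<longrightarrow> (\<forall>i j. samson_wins (length r) u v p' i q j)"
        using snoc.IH k l by blast
      have "k \<le> length u + 1" "l \<le> length v + 1"
        using eval_pos[OF k(1)] eval_pos[OF l(1)] unfolding pos_def by auto
      from step[OF k(2) l(2) i1 j1 ne H this] show ?thesis by simp
    qed
  qed
qed

theorem lemma3p5:
  fixes u v :: "'a::finite list" and n :: nat and r :: "'a bpos list"
    and i1 i2 j1 j2 :: nat
  assumes "n \<ge> 1"
    and "r \<in> rankers n u \<inter> rankers n v"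
    and "i1 \<in> pos u" and "i2 \<in> pos u" and "j1 \<in> pos v" and "j2 \<in> pos v"
    and "ord_type i1 (the (ranker_eval r u)) \<noteq> ord_type j1 (the (ranker_eval r v))"
  shows "samson_wins n u v i1 i2 j1 j2"
proof -
  from assms(2) have len: "length r = n" and eu: "ranker_eval r u \<noteq> None" and ev: "ranker_eval r v \<noteq> None"
    unfolding rankers_def by auto
  from eu obtain s where s: "ranker_eval r u = Some s" by auto
  from ev obtain t where t: "ranker_eval r v = Some t" by auto
  show ?thesis using main[of r u v] s t assms len by auto
qed

end
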